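(* Let $(V,E,c,p)$ be a PCSTP instance and $v_i,v_j\in V$. If $$p(v_i) > d^-_{pc}(v_i,v_j),$$ then every optimal solution that contains $v_j$ also contains $v_i$.
   Context: A PCSTP instance $(V,E,c,p)$: finite undirected connected graph $G=(V,E)$, $c:E\to\mathbb{Q}_{>0}$, $p:V\to\mathbb{Q}_{\ge0}$. For a tree $S\subseteq G$ (connected acyclic subgraph with at least one vertex), $C(S):=\sum_{e\in E(S)}c(e)+\sum_{v\in V\setminus V(S)}p(v)$; an optimal solution is a tree minimizing $C$. $T_p:=\{v\in V:p(v)>0\}$. A prize-constrained $(v_i,v_j)$-walk is a finite walk $W=(v_{i_1},e_{i_1},\dots,e_{i_{r-1}},v_{i_r})$ with $v_{i_1}=v_i$, $v_{i_r}=v_j$ in which no vertex of $T_p\cup\{v_i,v_j\}$ occurs more than once. $V(W),E(W)$ are its vertex and edge sets; for $1\le k\le r$, $W[1,k]$ is the initial subwalk $(v_{i_1},\dots,v_{i_k})$. For a walk $W$ from $a$ to $b$, $c_{pc}(W):=\sum_{e\in E(W)}c(e)-\sum_{v\in V(W)\setminus\{a,b\}}p(v)$. The left-rooted prize-constrained length is $l^-_{pc}(W):=\max\{c_{pc}(W[1,k]): 1\le k\le r,\ v_{i_k}\in T_p\cup\{v_j\}\}$, and the left-rooted prize-constrained distance is $d^-_{pc}(v_i,v_j):=\inf\{l^-_{pc}(W): W\text{ a prize-constrained }(v_i,v_j)\text{-walk}\}$ (not symmetric in general). *)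

theory Defs
  imports Complex_Main
begin

definition is_walk :: "'a set set \<Rightarrow> 'a list \<Rightarrow> bool" where
  "is_walk E ws \<longleftrightarrow> ws \<noteq> [] \<and> (\<forall>k. Suc k < length ws \<longrightarrow> {ws ! k, ws ! Suc k} \<in> E)"

definition walk_edges :: "'a list \<Rightarrow> 'a set set" where
  "walk_edges ws = {{ws ! k, ws ! Suc k} | k. Suc k < length ws}"

definition connected_graph :: "'a set \<Rightarrow> 'a set set \<Rightarrow> bool" where
  "connected_graph V E \<longleftrightarrow>
     (\<forall>u\<in>V. \<forall>v\<in>V. \<exists>ws. is_walk E ws \<and> set ws \<subseteq> V \<and> hd ws = u \<and> last ws = v)"

definition has_cycle :: "'a set set \<Rightarrow> bool" where
  "has_cycle E \<longleftrightarrow> (\<exists>ws. length ws \<ge> 3 \<and> distinct ws \<and> is_walk E ws \<and> {last ws, hd ws} \<in> E)"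

definition is_tree :: "'a set \<Rightarrow> 'a set set \<Rightarrow> 'a set \<Rightarrow> 'a set set \<Rightarrow> bool" where
  "is_tree V E VS ES \<longleftrightarrow> VS \<noteq> {} \<and> VS \<subseteq> V \<and> ES \<subseteq> E \<and> (\<forall>e\<in>ES. e \<subseteq> VS)
     \<and> connected_graph VS ES \<and> \<not> has_cycle ES"

definition pcstp :: "'a set \<Rightarrow> 'a set set \<Rightarrow> ('a set \<Rightarrow> real) \<Rightarrow> ('a \<Rightarrow> real) \<Rightarrow> bool" where
  "pcstp V E c p \<longleftrightarrow> finite V \<and> V \<noteq> {}
     \<and> (\<forall>e\<in>E. \<exists>u v. e = {u, v} \<and> u \<noteq> v \<and> u \<in> V \<and> v \<in> V)
     \<and> connected_graph V E
     \<and> (\<forall>e\<in>E. c e \<in> \<rat> \<and> c e > 0)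
     \<and> (\<forall>v\<in>V. p v \<in> \<rat> \<and> p v \<ge> 0)"

definition Tp :: "'a set \<Rightarrow> ('a \<Rightarrow> real) \<Rightarrow> 'a set" where
  "Tp V p = {v \<in> V. p v > 0}"

definition sol_cost :: "'a set \<Rightarrow> ('a set \<Rightarrow> real) \<Rightarrow> ('a \<Rightarrow> real) \<Rightarrow> 'a set \<Rightarrow> 'a set set \<Rightarrow> real" where
  "sol_cost V c p VS ES = (\<Sum>e\<in>ES. c e) + (\<Sum>v\<in>V - VS. p v)"

definition optimal_solution ::
  "'a set \<Rightarrow> 'a set set \<Rightarrow> ('a set \<Rightarrow> real) \<Rightarrow> ('a \<Rightarrow> real) \<Rightarrow> 'a set \<Rightarrow> 'a set set \<Rightarrow> bool" where
  "optimal_solution V E c p VS ES \<longleftrightarrow> is_tree V E VS ES \<and>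
     (\<forall>VS' ES'. is_tree V E VS' ES' \<longrightarrow> sol_cost V c p VS ES \<le> sol_cost V c p VS' ES')"

definition pc_walk :: "'a set \<Rightarrow> 'a set set \<Rightarrow> ('a \<Rightarrow> real) \<Rightarrow> 'a \<Rightarrow> 'a \<Rightarrow> 'a list \<Rightarrow> bool" where
  "pc_walk V E p vi vj ws \<longleftrightarrow> is_walk E ws \<and> set ws \<subseteq> V \<and> hd ws = vi \<and> last ws = vj
     \<and> (\<forall>v \<in> Tp V p \<union> {vi, vj}. count_list ws v \<le> 1)"

definition c_pc :: "('a set \<Rightarrow> real) \<Rightarrow> ('a \<Rightarrow> real) \<Rightarrow> 'a list \<Rightarrow> real" where
  "c_pc c p ws = (\<Sum>e\<in>walk_edges ws. c e) - (\<Sum>v\<in>set ws - {hd ws, last ws}. p v)"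

text \<open>Left-rooted prize-constrained length; W[1,k] = take k ws, v_{i_k} = ws ! (k-1).\<close>
definition l_minus :: "'a set \<Rightarrow> ('a set \<Rightarrow> real) \<Rightarrow> ('a \<Rightarrow> real) \<Rightarrow> 'a \<Rightarrow> 'a list \<Rightarrow> real" where
  "l_minus V c p vj ws =
     Max {c_pc c p (take k ws) | k. 1 \<le> k \<and> k \<le> length ws \<and> ws ! (k - 1) \<in> Tp V p \<union> {vj}}"

definition d_minus ::
  "'a set \<Rightarrow> 'a set set \<Rightarrow> ('a set \<Rightarrow> real) \<Rightarrow> ('a \<Rightarrow> real) \<Rightarrow> 'a \<Rightarrow> 'a \<Rightarrow> real" where
  "d_minus V E c p vi vj = Inf {l_minus V c p vj ws | ws. pc_walk V E p vi vj ws}"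

end

theory Submission
  imports Defs
begin


fun w :: "'a set set \<Rightarrow> 'a list \<Rightarrow> bool" where
  "w E [] = False"
| "w E [x] = True"
| "w E (x # y # zs) = ({x,y} \<in> E \<and> w E (y # zs))"

lemma all_suc_split: "(\<forall>k. P k) \<longleftrightarrow> P 0 \<and> (\<forall>k. P (Suc k))"
  by (metis not0_implies_Suc)

lemma is_walk_w: "is_walk E ws = w E ws"
proof (induction E ws rule: w.induct)
  case (1 E) then show ?case by (simp add: is_walk_def)
next
  case (2 E x) then show ?case by (simp add: is_walk_def)
next
  case (3 E x y zs)
  have "is_walk E (x # y # zs) = ({x,y} \<in> E \<and> is_walk E (y # zs))"
    unfolding is_walk_def by (subst all_suc_split) simp
  then show ?case using 3 by simp
qed

lemma walk_edges_simps[simp]: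
  "walk_edges [] = {}" "walk_edges [x] = {}"
  "walk_edges (x # y # zs) = insert {x,y} (walk_edges (y # zs))"
proof -
  show "walk_edges [] = {}" "walk_edges [x] = {}" by (auto simp: walk_edges_def)
  have "{{(x#y#zs) ! k, (x#y#zs) ! Suc k} | k. Suc k < length (x#y#zs)}
      = insert {x,y} {{(y#zs) ! k, (y#zs) ! Suc k} | k. Suc k < length (y#zs)}"
  proof (intro set_eqI iffI)
    fix e assume "e \<in> {{(x#y#zs) ! k, (x#y#zs) ! Suc k} | k. Suc k < length (x#y#zs)}"
    then obtain k where "e = {(x#y#zs) ! k, (x#y#zs) ! Suc k}" "Suc k < length (x#y#zs)" by blast
    then show "e \<in> insert {x,y} {{(y#zs) ! k, (y#zs) ! Suc k} | k. Suc k < length (y#zs)}"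
      by (cases k) auto
  next
    fix e assume "e \<in> insert {x,y} {{(y#zs) ! k, (y#zs) ! Suc k} | k. Suc k < length (y#zs)}"
    then show "e \<in> {{(x#y#zs) ! k, (x#y#zs) ! Suc k} | k. Suc k < length (x#y#zs)}"
    proof
      assume "e = {x,y}" then show ?thesis apply (rule_tac CollectI) apply (rule exI[of _ 0]) by simp
    next
      assume "e \<in> {{(y#zs) ! k, (y#zs) ! Suc k} | k. Suc k < length (y#zs)}"
      then obtain k where "e = {(y#zs) ! k, (y#zs) ! Suc k}" "Suc k < length (y#zs)" by blast
      then show ?thesis apply (rule_tac CollectI) apply (rule exI[of _ "Suc k"]) by simp
    qed
  qed
  then show "walk_edges (x # y # zs) = insert {x,y} (walk_edges (y # zs))"
    by (simp add: walk_edges_def)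
qed

lemma w_nonempty: "w E ws \<Longrightarrow> ws \<noteq> []" by (cases ws) auto

lemma w_append: "w E xs \<Longrightarrow> w E ys \<Longrightarrow> {last xs, hd ys} \<in> E \<Longrightarrow> w E (xs @ ys)"
proof (induction E xs rule: w.induct)
  case (1 E) then show ?case by simp
next
  case (2 E x) then show ?case by (cases ys) auto
next
  case (3 E x y zs) then show ?case by auto
qed

lemma w_join: assumes "w E xs" "w E ys" "last xs = hd ys" shows "w E (xs @ tl ys)"
    "hd (xs @ tl ys) = hd xs" "last (xs @ tl ys) = last ys"
proof -
  obtain y r where ys: "ys = y # r" using assms(2) by (cases ys) auto
  show "w E (xs @ tl ys)"
  proof (cases r)
    case Nil then show ?thesis using assms ys by simp
  next
    case (Cons y2 r2) then show ?thesis using assms ys by (intro w_append) auto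
  qed
  show "hd (xs @ tl ys) = hd xs" using w_nonempty[OF assms(1)] by simp
  show "last (xs @ tl ys) = last ys" using assms ys by (cases r) auto
qed

lemma w_rev: "w E xs \<Longrightarrow> w E (rev xs)"
proof (induction E xs rule: w.induct)
  case (1 E) then show ?case by simp
next
  case (2 E x) then show ?case by simp
next
  case (3 E x y zs)
  then have "w E (rev (y#zs))" "{last (rev (y # zs)), hd [x]} \<in> E"
    by (auto simp: insert_commute)
  then have "w E (rev (y#zs) @ [x])" by (intro w_append) auto
  then show ?case by simp
qed

definition reach where "reach E u v \<longleftrightarrow> (\<exists>ws. w E ws \<and> hd ws = u \<and> last ws = v)"

lemma reach_refl: "reach E u u" unfolding reach_def by (rule exI[of _ "[u]"]) simp

lemma reach_edge: "{u,v} \<in> E \<Longrightarrow> reach E u v" unfolding reach_def by (rule exI[of _ "[u,v]"]) simp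

lemma reach_sym: "reach E u v \<Longrightarrow> reach E v u"
  unfolding reach_def using w_rev w_nonempty by (metis hd_rev last_rev)

lemma reach_trans: "reach E u v \<Longrightarrow> reach E v x \<Longrightarrow> reach E u x"
  unfolding reach_def using w_join by metis

lemma w_mono: "w E ws \<Longrightarrow> E \<subseteq> F \<Longrightarrow> w F ws"
  by (induction E ws rule: w.induct) auto

lemma reach_mono: "reach E u v \<Longrightarrow> E \<subseteq> F \<Longrightarrow> reach F u v"
  unfolding reach_def using w_mono by metis

lemma reach_lift: "(\<forall>x y. {x,y}\<in>F \<longrightarrow> reach F' x y) \<Longrightarrow> w F ws \<Longrightarrow> reach F' (hd ws) (last ws)"
proof (induction F ws rule: w.induct)
  case (1 E) then show ?case by simp
next
  case (2 E x) then show ?case by (simp add: reach_refl)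
next
  case (3 E x y zs) then show ?case using reach_trans by fastforce
qed

lemma w_set: "w F ws \<Longrightarrow> \<forall>e\<in>F. e\<subseteq>A \<Longrightarrow> hd ws \<in> A \<Longrightarrow> set ws \<subseteq> A"
  by (induction F ws rule: w.induct) force+

lemma conn_iff: "\<forall>e\<in>F. e\<subseteq>A \<Longrightarrow> connected_graph A F \<longleftrightarrow> (\<forall>u\<in>A. \<forall>v\<in>A. reach F u v)"
  unfolding connected_graph_def reach_def is_walk_w using w_set by metis

lemma w_own: "w E ws \<Longrightarrow> w (walk_edges ws) ws"
  by (induction E ws rule: w.induct) (auto intro: w_mono)

lemma walk_edges_sub: "w E ws \<Longrightarrow> walk_edges ws \<subseteq> E"
  by (induction E ws rule: w.induct) auto

lemma reach_in_walk: "w F P \<Longrightarrow> u \<in> set P \<Longrightarrow> reach F u (last P)"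
proof (induction F P rule: w.induct)
  case (1 E) then show ?case by simp
next
  case (2 E x) then show ?case by (simp add: reach_refl)
next
  case (3 E x y zs)
  show ?case
  proof (cases "u = x")
    case True
    then show ?thesis using 3 unfolding reach_def by (rule_tac x="x#y#zs" in exI) simp
  next
    case False
    then have "reach E u (last (y#zs))" using 3 by auto
    then show ?thesis by simp
  qed
qed

lemma distinct_walk: "w E ws \<Longrightarrow> \<exists>ws'. w E ws' \<and> distinct ws' \<and> hd ws' = hd ws \<and> last ws' = last ws \<and> set ws' \<subseteq> set ws"
proof (induction E ws rule: w.induct)
  case (1 E) then show ?case by simp
next
  case (2 E x) then show ?case by (rule_tac x="[x]" in exI) simp
next
  case (3 E x y zs)
  then obtain ys where ys: "w E ys" "distinct ys" "hd ys = y" "last ys = last (y#zs)" "set ys \<subseteq> set (y#zs)"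
    by auto
  have ne: "ys \<noteq> []" using ys w_nonempty by blast
  show ?case
  proof (cases "x \<in> set ys")
    case True
    define n where "n = length (takeWhile (\<lambda>z. z \<noteq> x) ys)"
    have d: "dropWhile (\<lambda>z. z \<noteq> x) ys = drop n ys" unfolding n_def by (rule dropWhile_eq_drop)
    have dne: "dropWhile (\<lambda>z. z \<noteq> x) ys \<noteq> []" using True by (simp add: dropWhile_eq_Nil_conv)
    have n: "n < length ys" using d dne by simp
    have hdx: "hd (drop n ys) = x" using dne d hd_dropWhile[OF dne] by simp
    have "w E (drop n ys)" using ys(1) n
      by (simp add: is_walk_w[symmetric] is_walk_def)
    moreover have "last (drop n ys) = last ys" using n by (simp add: last_drop)
    moreover have "set (drop n ys) \<subseteq> set ys" by (rule set_drop_subset)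
    ultimately show ?thesis using hdx ys by (rule_tac x="drop n ys" in exI) auto
  next
    case False
    obtain r where "ys = y # r" using ne ys(3) by (cases ys) auto
    then show ?thesis using False ys 3 by (rule_tac x="x # ys" in exI) auto
  qed
qed

lemma cycle_remove:
  assumes "has_cycle F" "\<forall>u\<in>A. \<forall>v\<in>A. reach F u v"
  shows "\<exists>e\<in>F. \<forall>u\<in>A. \<forall>v\<in>A. reach (F - {e}) u v"
proof -
  obtain ws where ws: "length ws \<ge> 3" "distinct ws" "is_walk F ws" "{last ws, hd ws} \<in> F"
    using assms(1) unfolding has_cycle_def by blast
  define e where "e = {last ws, hd ws}"
  have ne: "ws \<noteq> []" using ws by auto
  have lst: "last ws = ws ! (length ws - 1)" "hd ws = ws ! 0" using ne by (auto simp: last_conv_nth hd_conv_nth)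
  have "is_walk (F - {e}) ws"
    unfolding is_walk_def
  proof (intro conjI allI impI)
    show "ws \<noteq> []" by fact
    fix k assume k: "Suc k < length ws"
    have "{ws ! k, ws ! Suc k} \<in> F" using ws(3) k unfolding is_walk_def by blast
    moreover have "{ws ! k, ws ! Suc k} \<noteq> e"
    proof
      assume "{ws ! k, ws ! Suc k} = e"
      then have "(ws!k = ws!(length ws - 1) \<and> ws!Suc k = ws!0) \<or> (ws!k = ws!0 \<and> ws!Suc k = ws!(length ws - 1))"
        unfolding e_def lst by (auto simp: doubleton_eq_iff)
      then show False
      proof
        assume a: "ws!k = ws!(length ws - 1) \<and> ws!Suc k = ws!0"
        have "k = length ws - 1" using a ws(2) k nth_eq_iff_index_eq[OF ws(2), of k "length ws - 1"] by simp
        then show False using k by simp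
      next
        assume a: "ws!k = ws!0 \<and> ws!Suc k = ws!(length ws - 1)"
        have kl: "k < length ws" "0 < length ws" using k by linarith+
        have "k = 0" using a nth_eq_iff_index_eq[OF ws(2) kl] by simp
        moreover have "Suc k = length ws - 1" using a k nth_eq_iff_index_eq[OF ws(2), of "Suc k" "length ws - 1"] by simp
        ultimately show False using ws(1) by simp
      qed
    qed
    ultimately show "{ws ! k, ws ! Suc k} \<in> F - {e}" by simp
  qed
  then have r: "reach (F - {e}) (hd ws) (last ws)" unfolding reach_def is_walk_w by blast
  have l: "\<forall>x y. {x,y}\<in>F \<longrightarrow> reach (F - {e}) x y"
  proof (intro allI impI)
    fix x y assume xy: "{x,y} \<in> F"
    show "reach (F - {e}) x y"
    proof (cases "{x,y} = e")
      case True
      then have "(x = last ws \<and> y = hd ws) \<or> (x = hd ws \<and> y = last ws)"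
        unfolding e_def by (auto simp: doubleton_eq_iff)
      then show ?thesis using r reach_sym by metis
    next
      case False then show ?thesis using xy by (intro reach_edge) simp
    qed
  qed
  have "\<forall>u\<in>A. \<forall>v\<in>A. reach (F - {e}) u v"
  proof (intro ballI)
    fix u v assume uv: "u \<in> A" "v \<in> A"
    obtain zs where "w F zs" "hd zs = u" "last zs = v" using assms(2) uv unfolding reach_def by blast
    then show "reach (F - {e}) u v" using reach_lift[OF l] by blast
  qed
  then show ?thesis using ws(4) e_def by blast
qed

lemma spanning:
  "finite F \<Longrightarrow> \<forall>u\<in>A. \<forall>v\<in>A. reach F u v \<Longrightarrow> \<exists>F'\<subseteq>F. (\<forall>u\<in>A. \<forall>v\<in>A. reach F' u v) \<and> \<not> has_cycle F'"
proof (induction "card F" arbitrary: F rule: less_induct)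
  case less
  show ?case
  proof (cases "has_cycle F")
    case True
    then obtain e where e: "e \<in> F" "\<forall>u\<in>A. \<forall>v\<in>A. reach (F - {e}) u v"
      using cycle_remove less.prems by blast
    have "card (F - {e}) < card F" using e less.prems by (meson card_Diff1_less)
    then obtain F' where "F' \<subseteq> F - {e}" "\<forall>u\<in>A. \<forall>v\<in>A. reach F' u v" "\<not> has_cycle F'"
      using less e by (meson finite_Diff)
    then show ?thesis by blast
  next
    case False then show ?thesis using less.prems by blast
  qed
qed



lemma distinct_count: "distinct xs \<Longrightarrow> count_list xs v \<le> 1"
  by (induction xs) auto

lemma lminus_ge:
  assumes "1 \<le> k" "k \<le> length ws" "ws!(k-1) \<in> Tp V p \<union> {vj}"
  shows "c_pc c p (take k ws) \<le> l_minus V c p vj ws"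
proof -
  have fin: "finite {c_pc c p (take k ws) | k. 1 \<le> k \<and> k \<le> length ws \<and> ws ! (k - 1) \<in> Tp V p \<union> {vj}}"
    by (rule finite_subset[of _ "(\<lambda>k. c_pc c p (take k ws)) ` {..length ws}"]) auto
  then show ?thesis unfolding l_minus_def using assms by (intro Max_ge) auto
qed

lemma walk_edges_pow: "walk_edges ws \<subseteq> Pow (set ws)"
  unfolding walk_edges_def by auto

theorem proposition5:
  fixes V :: "'a set" and E :: "'a set set" and c :: "'a set \<Rightarrow> real" and p :: "'a \<Rightarrow> real"
  assumes "pcstp V E c p"
    and "vi \<in> V" and "vj \<in> V"
    and "p vi > d_minus V E c p vi vj"
    and "optimal_solution V E c p VS ES"
    and "vj \<in> VS"
  shows "vi \<in> VS"
proof (rule ccontr)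
  assume nvi: "vi \<notin> VS"
  have finV: "finite V" and Eprop: "\<forall>e\<in>E. \<exists>u v. e = {u,v} \<and> u\<noteq>v \<and> u\<in>V \<and> v\<in>V"
    and conV: "connected_graph V E" and cpos: "\<forall>e\<in>E. c e > 0" and pnn: "\<forall>v\<in>V. p v \<ge> 0"
    using assms(1) unfolding pcstp_def by auto
  have EV: "\<forall>e\<in>E. e \<subseteq> V"
  proof
    fix e assume "e \<in> E"
    then obtain u v where "e = {u,v}" "u \<in> V" "v \<in> V" using Eprop by blast
    then show "e \<subseteq> V" by simp
  qed
  have finE: "finite E"
  proof -
    have "E \<subseteq> Pow V" using EV by blast
    then show ?thesis using finV finite_subset by blast
  qed
  have tree: "is_tree V E VS ES"
    and opt: "\<And>VS' ES'. is_tree V E VS' ES' \<Longrightarrow> sol_cost V c p VS ES \<le> sol_cost V c p VS' ES'"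
    using assms(5) unfolding optimal_solution_def by auto
  have VSV: "VS \<subseteq> V" and ESE: "ES \<subseteq> E" and ESVS: "\<forall>e\<in>ES. e \<subseteq> VS"
    and conS: "connected_graph VS ES" using tree unfolding is_tree_def by auto
  have reachS: "\<forall>u\<in>VS. \<forall>v\<in>VS. reach ES u v" using conS conn_iff[OF ESVS] by blast
  define L where "L = {l_minus V c p vj ws | ws. pc_walk V E p vi vj ws}"
  have Lne: "L \<noteq> {}"
  proof -
    obtain ws where ws: "is_walk E ws" "set ws \<subseteq> V" "hd ws = vi" "last ws = vj"
      using conV assms(2,3) unfolding connected_graph_def by blast
    obtain ws' where ws': "w E ws'" "distinct ws'" "hd ws' = vi" "last ws' = vj" "set ws' \<subseteq> set ws"
      using distinct_walk[of E ws] ws is_walk_w by metis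
    have "pc_walk V E p vi vj ws'" unfolding pc_walk_def is_walk_w
      using ws' ws(2) distinct_count by auto
    then show ?thesis unfolding L_def by blast
  qed
  have Lbdd: "bdd_below L"
  proof (rule bdd_belowI)
    fix x assume "x \<in> L"
    then obtain ws where ws: "pc_walk V E p vi vj ws" and x: "x = l_minus V c p vj ws"
      unfolding L_def by blast
    have wk: "is_walk E ws" and sV: "set ws \<subseteq> V" and lst: "last ws = vj"
      using ws unfolding pc_walk_def by auto
    have ne: "ws \<noteq> []" using wk unfolding is_walk_def by auto
    have "ws ! (length ws - 1) = vj" using ne lst by (simp add: last_conv_nth)
    then have "c_pc c p (take (length ws) ws) \<le> l_minus V c p vj ws"
      using ne by (intro lminus_ge) (auto simp: Suc_le_eq)
    then have a: "c_pc c p ws \<le> x" using x by simp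
    have "walk_edges ws \<subseteq> E" using walk_edges_sub wk is_walk_w by metis
    then have e0: "0 \<le> (\<Sum>e\<in>walk_edges ws. c e)" using cpos by (intro sum_nonneg) (auto simp: less_imp_le)
    have "(\<Sum>v\<in>set ws - {hd ws, last ws}. p v) \<le> (\<Sum>v\<in>V. p v)"
      using finV sV pnn by (intro sum_mono2) auto
    then show "- (\<Sum>v\<in>V. p v) \<le> x" using a e0 unfolding c_pc_def by linarith
  qed
  have "Inf L < p vi" using assms(4) unfolding d_minus_def L_def by simp
  then obtain ws where pw: "pc_walk V E p vi vj ws" and lt: "l_minus V c p vj ws < p vi"
    using cInf_less_iff[OF Lne Lbdd] unfolding L_def by blast
  have wk: "is_walk E ws" and sV: "set ws \<subseteq> V" and hdw: "hd ws = vi" and lst: "last ws = vj"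
    using pw unfolding pc_walk_def by auto
  have ne: "ws \<noteq> []" using wk unfolding is_walk_def by auto
  have wsl: "ws ! (length ws - 1) = vj" using ne lst by (simp add: last_conv_nth)
  have ws0: "ws ! 0 = vi" using ne hdw by (simp add: hd_conv_nth)
  define k where "k = (LEAST i. i < length ws \<and> ws!i \<in> VS)"
  have exk: "length ws - 1 < length ws \<and> ws!(length ws - 1) \<in> VS" using ne wsl assms(6) by simp
  have hk: "k < length ws" "ws!k \<in> VS" using LeastI[where P="\<lambda>i. i < length ws \<and> ws!i \<in> VS", OF exk] unfolding k_def by auto
  have mink: "\<And>i. i < k \<Longrightarrow> ws!i \<notin> VS"
  proof -
    fix i assume ik: "i < k"
    have "\<not> (i < length ws \<and> ws!i \<in> VS)"
      using not_less_Least[of i "\<lambda>i. i < length ws \<and> ws!i \<in> VS"] ik unfolding k_def by blast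
    then show "ws!i \<notin> VS" using ik hk(1) by simp
  qed
  define m where "m = (LEAST i. k \<le> i \<and> i < length ws \<and> ws!i \<in> Tp V p \<union> {vj})"
  have exm: "k \<le> length ws - 1 \<and> length ws - 1 < length ws \<and> ws!(length ws - 1) \<in> Tp V p \<union> {vj}"
    using ne wsl hk by simp
  have hm: "k \<le> m" "m < length ws" "ws!m \<in> Tp V p \<union> {vj}"
    using LeastI[where P="\<lambda>i. k \<le> i \<and> i < length ws \<and> ws!i \<in> Tp V p \<union> {vj}", OF exm] unfolding m_def by auto
  have minm: "\<And>i. k \<le> i \<Longrightarrow> i < m \<Longrightarrow> ws!i \<notin> Tp V p \<union> {vj}"
  proof -
    fix i assume ki: "k \<le> i" and im: "i < m"
    have "\<not> (k \<le> i \<and> i < length ws \<and> ws!i \<in> Tp V p \<union> {vj})"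
      using not_less_Least[of i "\<lambda>i. k \<le> i \<and> i < length ws \<and> ws!i \<in> Tp V p \<union> {vj}"] im unfolding m_def by blast
    then show "ws!i \<notin> Tp V p \<union> {vj}" using ki im hm(2) by simp
  qed
  define P where "P = take (Suc m) ws"
  have lenP: "length P = Suc m" using hm(2) unfolding P_def by simp
  have nthP: "\<And>i. i < Suc m \<Longrightarrow> P ! i = ws ! i" unfolding P_def by simp
  have wP: "w E P"
  proof -
    have "is_walk E P" using wk hm(2) unfolding P_def is_walk_def by auto
    then show ?thesis using is_walk_w by metis
  qed
  have Pne: "P \<noteq> []" using lenP by auto
  have hdP: "hd P = vi" using Pne nthP[of 0] ws0 by (simp add: hd_conv_nth)
  have lastP: "last P = ws ! m" using Pne lenP nthP[of m] by (simp add: last_conv_nth)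
  have setP: "set P \<subseteq> V" using sV unfolding P_def using set_take_subset by fastforce
  have viP: "vi \<in> set P" using lenP nthP[of 0] ws0 by (metis nth_mem zero_less_Suc)
  have wkP: "ws ! k \<in> set P" using lenP nthP[of k] hm(1) by (metis le_imp_less_Suc nth_mem)
  have cle: "c_pc c p P \<le> l_minus V c p vj ws"
    unfolding P_def using hm by (intro lminus_ge) auto
  have zero: "\<forall>v \<in> set P - {vi, ws!m} - (set P - VS - {vi, ws!m}). p v = 0"
  proof
    fix v assume v: "v \<in> set P - {vi, ws!m} - (set P - VS - {vi, ws!m})"
    have "v \<in> set P" using v by blast
    then obtain i where "i < length P" "P!i = v" by (auto simp: in_set_conv_nth)
    then have i: "i < Suc m" "v = ws ! i" using lenP nthP by auto
    have vVS: "v \<in> VS" "v \<noteq> ws ! m" using v by auto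
    have "k \<le> i"
    proof (rule ccontr)
      assume "\<not> k \<le> i"
      then have "ws!i \<notin> VS" using mink by simp
      then show False using vVS i by simp
    qed
    moreover have "i < m" using i vVS by (cases "i = m") auto
    ultimately have "v \<notin> Tp V p" using minm i by auto
    moreover have vV: "v \<in> V" using v setP by auto
    ultimately have "\<not> p v > 0" unfolding Tp_def by simp
    moreover have "p v \<ge> 0" using pnn vV by simp
    ultimately show "p v = 0" by linarith
  qed
  define VS' where "VS' = VS \<union> set P"
  define ES0 where "ES0 = ES \<union> walk_edges P"
  have WPE: "walk_edges P \<subseteq> E" using walk_edges_sub wP by metis
  have ES0E: "ES0 \<subseteq> E" using WPE ESE unfolding ES0_def by auto
  have finES0: "finite ES0" using ES0E finE finite_subset by blast
  have ES0VS': "\<forall>e\<in>ES0. e \<subseteq> VS'" using ESVS walk_edges_pow[of P] unfolding ES0_def VS'_def by blast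
  have toK: "\<forall>u\<in>VS'. reach ES0 u (ws!k)"
  proof
    fix u assume "u \<in> VS'"
    then have "u \<in> VS \<or> u \<in> set P" unfolding VS'_def by simp
    then show "reach ES0 u (ws!k)"
    proof
      assume "u \<in> VS"
      then have "reach ES u (ws!k)" using reachS hk(2) by blast
      then show ?thesis unfolding ES0_def by (rule reach_mono) auto
    next
      assume uP: "u \<in> set P"
      have wo: "w (walk_edges P) P" using w_own wP by blast
      have "reach (walk_edges P) u (ws!k)"
        using reach_trans[OF reach_in_walk[OF wo uP] reach_sym[OF reach_in_walk[OF wo wkP]]] .
      then show ?thesis unfolding ES0_def by (rule reach_mono) auto
    qed
  qed
  have reach0: "\<forall>u\<in>VS'. \<forall>v\<in>VS'. reach ES0 u v"
  proof (intro ballI)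
    fix u v assume "u \<in> VS'" "v \<in> VS'"
    then have a: "reach ES0 u (ws!k)" "reach ES0 v (ws!k)" using toK by blast+
    show "reach ES0 u v" using reach_trans[OF a(1) reach_sym[OF a(2)]] .
  qed
  obtain F where F: "F \<subseteq> ES0" "\<forall>u\<in>VS'. \<forall>v\<in>VS'. reach F u v" "\<not> has_cycle F"
    using spanning[OF finES0 reach0] by blast
  have FVS': "\<forall>e\<in>F. e \<subseteq> VS'" using F(1) ES0VS' by blast
  have "is_tree V E VS' F" unfolding is_tree_def
    using F FVS' conn_iff[OF FVS'] ES0E VSV setP viP unfolding VS'_def by auto
  then have costle: "sol_cost V c p VS ES \<le> sol_cost V c p VS' F" by (rule opt)
  have finP: "finite (set P)" by simp
  have cnn: "\<And>A. A \<subseteq> E \<Longrightarrow> 0 \<le> sum c A" using cpos by (intro sum_nonneg) (auto simp: less_imp_le)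
  have s1: "sum c F \<le> sum c ES0" using finES0 F(1) ES0E cpos by (intro sum_mono2) (auto simp: less_imp_le)
  have finES: "finite ES" using ESE finE finite_subset by blast
  have finWP: "finite (walk_edges P)" using WPE finE finite_subset by blast
  have s2: "sum c ES0 \<le> sum c ES + sum c (walk_edges P)"
    using sum_Un[OF finES finWP, of c] cnn[of "ES \<inter> walk_edges P"] ESE unfolding ES0_def by auto
  have s3: "sum p (V - VS) = sum p (V - VS') + sum p (set P - VS)"
  proof -
    have "V - VS = (V - VS') \<union> (set P - VS)" using setP unfolding VS'_def by auto
    moreover have "sum p ((V - VS') \<union> (set P - VS)) = sum p (V - VS') + sum p (set P - VS)"
      by (rule sum.union_disjoint) (use finV in \<open>auto simp: VS'_def\<close>)
    ultimately show ?thesis by simp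
  qed
  have s4: "c_pc c p P = sum c (walk_edges P) - sum p (set P - {vi, ws!m})"
    unfolding c_pc_def hdP lastP by simp
  have s5: "sum p (set P - {vi, ws!m}) = sum p (set P - VS - {vi, ws!m})"
    using zero by (intro sum.mono_neutral_right) auto
  have s6: "sum p (set P - VS - {vi, ws!m}) \<le> sum p (set P - VS - {vi})"
    using setP pnn by (intro sum_mono2) auto
  have s7: "sum p (set P - VS) = p vi + sum p (set P - VS - {vi})"
    using viP nvi by (intro sum.remove) auto
  have "sol_cost V c p VS' F < sol_cost V c p VS ES"
    unfolding sol_cost_def using s1 s2 s3 s4 s5 s6 s7 cle lt by linarith
  then show False using costle by linarith
qed

end
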